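(* Let $k'_X$ be a kernel on a set $\mathcal{X}$ with $\sup_xk'_X(x,x)\le B_{k'}^2$, let $\mathfrak{K}$ be a kernel on $\mathcal{H}_{k'_X}$ with canonical feature map $\Phi_{\mathfrak{K}}$, and let $\mathcal{B}$ be the closed ball of radius $B_{k'}$ in $\mathcal{H}_{k'_X}$. Assume that for any $u,v\in\mathcal{B}$ and unit-norm vector $e\in\mathcal{H}_{k'_X}$, the function $h_{u,v,e}:(\lambda,\mu)\in\mathbb{R}^2\mapsto\mathfrak{K}(u+\lambda e,v+\mu e)$ admits a mixed partial derivative $\partial_1\partial_2h_{u,v,e}$ at $(0,0)$ which is bounded in absolute value by a constant $C_{\mathfrak{K}}^2$ independent of $(u,v,e)$. Then $\|\Phi_{\mathfrak{K}}(u)-\Phi_{\mathfrak{K}}(v)\|\le C_{\mathfrak{K}}\|u-v\|$ for all $u,v\in\mathcal{B}$.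
   Context: The canonical feature map of $\mathfrak{K}$ is $\Phi_{\mathfrak{K}}(v)=\mathfrak{K}(v,\cdot)\in\mathcal{H}_{\mathfrak{K}}$, the RKHS of $\mathfrak{K}$. *)

theory Defs
  imports "HOL-Analysis.Analysis"
begin

definition is_kernel_on :: "'a set \<Rightarrow> ('a \<Rightarrow> 'a \<Rightarrow> real) \<Rightarrow> bool" where
  "is_kernel_on X k \<longleftrightarrow>
     (\<forall>x\<in>X. \<forall>y\<in>X. k x y = k y x) \<and>
     (\<forall>c :: ('a \<times> real) list. set (map fst c) \<subseteq> X \<longrightarrow>
        0 \<le> (\<Sum>(x,a)\<leftarrow>c. \<Sum>(y,b)\<leftarrow>c. a * b * k x y))"

text \<open>Elements of the span of the feature map, represented as finite formal
  combinations \<open>\<Sum> a_i k(x_i,.)\<close> (list of pairs (x_i, a_i)), with the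
  RKHS norm of the Moore-Aronszajn construction.\<close>
definition rkhs_norm :: "('a \<Rightarrow> 'a \<Rightarrow> real) \<Rightarrow> ('a \<times> real) list \<Rightarrow> real" where
  "rkhs_norm k c = sqrt (\<Sum>(x,a)\<leftarrow>c. \<Sum>(y,b)\<leftarrow>c. a * b * k x y)"

definition feature_map :: "('a \<Rightarrow> 'a \<Rightarrow> real) \<Rightarrow> 'a \<Rightarrow> ('a \<times> real) list" where
  "feature_map k v = [(v, 1)]"

definition rkhs_diff :: "('a \<times> real) list \<Rightarrow> ('a \<times> real) list \<Rightarrow> ('a \<times> real) list" where
  "rkhs_diff c d = c @ map (\<lambda>(x,a). (x, - a)) d"

text \<open>\<open>h\<close> admits the mixed partial derivative \<open>\<partial>_1 \<partial>_2 h\<close> at (0,0) with value D: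
  \<open>\<partial>_2 h(\<lambda>,0)\<close> exists for \<lambda> near 0 and is differentiable at \<lambda> = 0 with derivative D.\<close>
definition has_mixed_partial_at_0 :: "(real \<Rightarrow> real \<Rightarrow> real) \<Rightarrow> real \<Rightarrow> bool" where
  "has_mixed_partial_at_0 h D \<longleftrightarrow>
     (\<exists>g. (\<forall>\<^sub>F l in nhds 0. ((\<lambda>m. h l m) has_real_derivative g l) (at 0)) \<and>
          (g has_real_derivative D) (at 0))"

end

theory Submission
  imports Defs
begin

theorem lemmaA3:
  fixes X :: "'x set"
    and k' :: "'x \<Rightarrow> 'x \<Rightarrow> real"
    and \<phi> :: "'x \<Rightarrow> 'h :: {real_inner, complete_space}"
    and B :: real
    and K :: "'h \<Rightarrow> 'h \<Rightarrow> real"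
    and C :: real
  assumes k'_kernel: "is_kernel_on X k'"
    and k'_bound: "\<forall>x\<in>X. k' x x \<le> B\<^sup>2"
    and H_feature: "\<forall>x\<in>X. \<forall>y\<in>X. k' x y = inner (\<phi> x) (\<phi> y)"
    and H_dense: "closure (span (\<phi> ` X)) = UNIV"
    and K_kernel: "is_kernel_on UNIV K"
    and C_nonneg: "0 \<le> C"
    and mixed: "\<forall>u\<in>cball 0 B. \<forall>v\<in>cball 0 B. \<forall>e. norm e = 1 \<longrightarrow>
                  (\<exists>D. has_mixed_partial_at_0 (\<lambda>l m. K (u + l *\<^sub>R e) (v + m *\<^sub>R e)) D
                       \<and> \<bar>D\<bar> \<le> C\<^sup>2)"
  shows "\<forall>u\<in>cball 0 B. \<forall>v\<in>cball 0 B.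
           rkhs_norm K (rkhs_diff (feature_map K u) (feature_map K v)) \<le> C * norm (u - v)"
proof (intro ballI)
  fix u v :: 'h
  assume u: "u \<in> cball 0 B" and v: "v \<in> cball 0 B"
  have sumeq: "rkhs_norm K (rkhs_diff (feature_map K u) (feature_map K v))
      = sqrt (K u u - K u v - K v u + K v v)"
    by (simp add: rkhs_norm_def rkhs_diff_def feature_map_def)
  show "rkhs_norm K (rkhs_diff (feature_map K u) (feature_map K v)) \<le> C * norm (u - v)"
  proof (cases "u = v")
    case True
    then show ?thesis using sumeq C_nonneg by simp
  next
    case False
    define t where "t = norm (u - v)"
    have tpos: "0 < t" using False by (simp add: t_def)
    define e where "e = (1 / t) *\<^sub>R (u - v)"
    have ne: "norm e = 1" using tpos by (simp add: e_def t_def)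
    have ue: "u = v + t *\<^sub>R e" using tpos by (simp add: e_def)
    define g where "g = (\<lambda>l m. K (v + l *\<^sub>R e) (v + m *\<^sub>R e))"
    have inball: "v + a *\<^sub>R e \<in> cball 0 B" if "0 \<le> a" "a \<le> t" for a
    proof -
      have "v + a *\<^sub>R e = (1 - a/t) *\<^sub>R v + (a/t) *\<^sub>R u"
        using tpos by (simp add: e_def algebra_simps)
      moreover have "(1 - a/t) *\<^sub>R v + (a/t) *\<^sub>R u \<in> cball 0 B"
        using convexD[OF convex_cball v u, of "1 - a/t" "a/t"] that tpos by auto
      ultimately show ?thesis by simp
    qed
    have H: "\<exists>D gg. \<bar>D\<bar> \<le> C\<^sup>2 \<and>
        (\<forall>\<^sub>F l in nhds 0. ((\<lambda>m. g (a+l) (b+m)) has_real_derivative gg l) (at 0)) \<and>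
        (gg has_real_derivative D) (at 0)"
      if ab: "0 \<le> a" "a \<le> t" "0 \<le> b" "b \<le> t" for a b
    proof -
      obtain D where D: "has_mixed_partial_at_0
          (\<lambda>l m. K (v + a *\<^sub>R e + l *\<^sub>R e) (v + b *\<^sub>R e + m *\<^sub>R e)) D" "\<bar>D\<bar> \<le> C\<^sup>2"
        using mixed inball[OF ab(1,2)] inball[OF ab(3,4)] ne by blast
      have eq: "(\<lambda>l m. K (v + a *\<^sub>R e + l *\<^sub>R e) (v + b *\<^sub>R e + m *\<^sub>R e))
           = (\<lambda>l m. g (a+l) (b+m))"
        by (simp add: g_def scaleR_add_left add.assoc)
      show ?thesis using D unfolding eq has_mixed_partial_at_0_def by blast
    qed
    have d2: "DERIV (g a) b :> deriv (g a) b" if ab: "0 \<le> a" "a \<le> t" "0 \<le> b" "b \<le> t" for a b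
    proof -
      obtain D gg where "\<forall>\<^sub>F l in nhds 0. ((\<lambda>m. g (a+l) (b+m)) has_real_derivative gg l) (at 0)"
        using H[OF ab] by blast
      then have "((\<lambda>m. g a (b+m)) has_real_derivative gg 0) (at 0)"
        using eventually_nhds_x_imp_x by fastforce
      then have "DERIV (g a) b :> gg 0"
        using DERIV_shift[of "g a" "gg 0" 0 b] by (simp add: add.commute)
      then show ?thesis using DERIV_imp_deriv by metis
    qed
    define G where "G = (\<lambda>a b. deriv (g a) b)"
    define phi where "phi = (\<lambda>m. g t m - g 0 m)"
    have "\<exists>m0. 0 < m0 \<and> m0 < t \<and> phi t - phi 0 = (t - 0) * (G t m0 - G 0 m0)"
      unfolding phi_def G_def
      by (rule MVT2[OF tpos]) (intro DERIV_diff d2, use tpos in auto)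
    then obtain m0 where m0: "0 < m0" "m0 < t" "phi t - phi 0 = t * (G t m0 - G 0 m0)"
      by auto
    define psi where "psi = (\<lambda>a. G a m0)"
    have dpsi: "\<exists>D. \<bar>D\<bar> \<le> C\<^sup>2 \<and> DERIV psi a :> D" if "0 \<le> a" "a \<le> t" for a
    proof -
      note ab = that
      obtain D gg where D: "\<bar>D\<bar> \<le> C\<^sup>2"
        "\<forall>\<^sub>F l in nhds 0. ((\<lambda>m. g (a+l) (m0+m)) has_real_derivative gg l) (at 0)"
        "(gg has_real_derivative D) (at 0)"
        using H[OF ab(1,2), of m0] m0 by auto
      have ev: "\<forall>\<^sub>F l in nhds 0. psi (l + a) = gg l"
        using D(2)
      proof eventually_elim
        case (elim l)
        then have "DERIV (g (a+l)) m0 :> gg l"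
          using DERIV_shift[of "g (a+l)" "gg l" 0 m0] by (simp add: add.commute)
        then show ?case unfolding psi_def G_def using DERIV_imp_deriv by (metis add.commute)
      qed
      have "((\<lambda>l. psi (l + a)) has_real_derivative D) (at 0)"
        using DERIV_cong_ev[OF refl ev refl] D(3) by simp
      then have "DERIV psi a :> D" using DERIV_shift[of psi D 0 a] by simp
      then show ?thesis using D(1) by blast
    qed
    define Dp where "Dp = (\<lambda>a. SOME D. \<bar>D\<bar> \<le> C\<^sup>2 \<and> DERIV psi a :> D)"
    have Dp: "\<bar>Dp a\<bar> \<le> C\<^sup>2 \<and> DERIV psi a :> Dp a" if "0 \<le> a" "a \<le> t" for a
      unfolding Dp_def by (rule someI_ex[OF dpsi[OF that]])
    have "\<exists>l0. 0 < l0 \<and> l0 < t \<and> psi t - psi 0 = (t - 0) * Dp l0"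
      by (rule MVT2[OF tpos]) (use Dp in auto)
    then obtain l0 where l0: "0 < l0" "l0 < t" "psi t - psi 0 = t * Dp l0" by auto
    have Dl0: "\<bar>Dp l0\<bar> \<le> C\<^sup>2" using Dp[of l0] l0 by auto
    have "K u u - K u v - K v u + K v v = phi t - phi 0"
      unfolding phi_def g_def ue by simp
    also have "\<dots> = t * (t * Dp l0)" using m0(3) l0(3) unfolding psi_def by simp
    also have "\<dots> \<le> t * (t * C\<^sup>2)"
      using Dl0 tpos by (intro mult_left_mono) auto
    also have "\<dots> = (C * t)\<^sup>2" by (simp add: power2_eq_square)
    finally have "sqrt (K u u - K u v - K v u + K v v) \<le> sqrt ((C * t)\<^sup>2)"
      by (rule real_sqrt_le_mono)
    also have "\<dots> = C * t" using C_nonneg tpos by simp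
    finally show ?thesis using sumeq t_def by simp
  qed
qed

end
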